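(* Let $\Sigma=(\mathbb{N}_0,X,U,\mathscr{U},\phi)$ be a control system as in the standing setup (in particular $\mathscr U$ is a compact metrizable space and $\phi$ is continuous), and let $Q\subset X$ be a compact control set with nonempty interior. Then the following are equivalent: (1) $Q$ is equi-invariant in the mean; (2) $Q$ is finitely equi-invariant in the mean; (3) $Q$ has bounded invariance complexity in the mean.
   Context: Standing setup: $(X,d)$ is a metric space, $U$ is a compact metric space, and $F:X\times U\to X$ is a map such that $F_u:=F(\cdot,u)$ is continuous for every $u\in U$. Let $\mathscr U=U^{\mathbb N_0}$ with the product topology. For $\omega=(\omega_0,\omega_1,\dots)\in\mathscr U$, $x\in X$, set $\phi(0,x,\omega)=x$ and $\phi(k,x,\omega)=F_{\omega_{k-1}}\circ\cdots\circ F_{\omega_0}(x)$ for $k\ge1$. It is assumed that $\phi:\mathbb N_0\times X\times\mathscr U\to X$ is continuous. Notation: $\mathbb N=\{1,2,\dots\}$; $B(x,\delta)$ is the open ball; $d(y,Q)=\inf_{q\in Q}d(y,q)$. Control set: $D\subset X$ is a control set if (i) for every $x\in D$ there is $\omega\in\mathscr U$ with $\phi(k,x,\omega)\in D$ for all $k\in\mathbb N_0$; (ii) for every $x\in D$, $D\subset\operatorname{cl}\mathcal O^+(x)$, where $\mathcal O^+(x)=\{\phi(m,x,\omega):m\in\mathbb N_0,\omega\in\mathscr U\}$; (iii) $D$ is maximal with (i) and (ii). Equi-invariance in the mean: $x\in Q$ is a finitely equi-invariant point in the mean of $Q$ if for every $\varepsilon>0$ there exist $\delta>0$ and a finite set $F\subset\mathscr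 U$ such that for every $y\in B(x,\delta)\cap Q$ there is $\omega\in F$ with $\frac1n\sum_{i=0}^{n-1}d(\phi(i,y,\omega),Q)<\varepsilon$ for all $n\in\mathbb N$; it is an equi-invariant point in the mean if this holds with $F$ a singleton. $Q$ is (finitely) equi-invariant in the mean if every point of $Q$ is such a point. Invariance complexity in the mean: $\hat Q^\varepsilon_{n,\omega}=\{x\in Q:\max_{1\le k\le n}\frac1k\sum_{i=0}^{k-1}d(\phi(i,x,\omega),Q)<\varepsilon\}$; $F\subset\mathscr U$ is $(n,\varepsilon,Q)$-spanning in the mean if $Q=\bigcup_{\omega\in F}\hat Q^\varepsilon_{n,\omega}$; $\hat r_{inv}(n,\varepsilon,Q)$ is the minimal cardinality of such $F$; $Q$ has bounded invariance complexity in the mean if for every $\varepsilon>0$ there is $C$ with $\hat r_{inv}(n,\varepsilon,Q)\le C$ for all $n\in\mathbb N$. *)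

theory Defs
  imports "HOL-Analysis.Analysis" "HOL-Library.Extended_Nat"
begin

text \<open>Control system: state space the metric type 'x, control range U :: 'u set (compact),
  admissible control sequences = sequences nat \<Rightarrow> 'u with values in U (product topology on nat \<Rightarrow> 'u).\<close>

definition controls :: "'u set \<Rightarrow> (nat \<Rightarrow> 'u) set" where
  "controls U = {\<omega>. \<forall>i. \<omega> i \<in> U}"

fun phi :: "('x \<Rightarrow> 'u \<Rightarrow> 'x) \<Rightarrow> nat \<Rightarrow> 'x \<Rightarrow> (nat \<Rightarrow> 'u) \<Rightarrow> 'x" where
  "phi F 0 x \<omega> = x"
| "phi F (Suc k) x \<omega> = F (phi F k x \<omega>) (\<omega> k)"

definition orbit_plus :: "('x \<Rightarrow> 'u \<Rightarrow> 'x) \<Rightarrow> 'u set \<Rightarrow> 'x \<Rightarrow> 'x set" where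
  "orbit_plus F U x = {phi F m x \<omega> | m \<omega>. \<omega> \<in> controls U}"

definition cs_props :: "('x::topological_space \<Rightarrow> 'u \<Rightarrow> 'x) \<Rightarrow> 'u set \<Rightarrow> 'x set \<Rightarrow> bool" where
  "cs_props F U D \<longleftrightarrow>
     (\<forall>x\<in>D. \<exists>\<omega>\<in>controls U. \<forall>k. phi F k x \<omega> \<in> D) \<and>
     (\<forall>x\<in>D. D \<subseteq> closure (orbit_plus F U x))"

definition control_set :: "('x::topological_space \<Rightarrow> 'u \<Rightarrow> 'x) \<Rightarrow> 'u set \<Rightarrow> 'x set \<Rightarrow> bool" where
  "control_set F U D \<longleftrightarrow> cs_props F U D \<and> (\<forall>D'. D \<subseteq> D' \<and> cs_props F U D' \<longrightarrow> D' = D)"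

definition avg_dist :: "('x::metric_space \<Rightarrow> 'u \<Rightarrow> 'x) \<Rightarrow> 'x set \<Rightarrow> nat \<Rightarrow> 'x \<Rightarrow> (nat \<Rightarrow> 'u) \<Rightarrow> real" where
  "avg_dist F Q n y \<omega> = (\<Sum>i<n. infdist (phi F i y \<omega>) Q) / real n"

definition fin_equi_inv_mean_point ::
  "('x::metric_space \<Rightarrow> 'u \<Rightarrow> 'x) \<Rightarrow> 'u set \<Rightarrow> 'x set \<Rightarrow> 'x \<Rightarrow> bool" where
  "fin_equi_inv_mean_point F U Q x \<longleftrightarrow> x \<in> Q \<and>
     (\<forall>\<epsilon>>0. \<exists>\<delta>>0. \<exists>Fs. finite Fs \<and> Fs \<subseteq> controls U \<and>
        (\<forall>y\<in>ball x \<delta> \<inter> Q. \<exists>\<omega>\<in>Fs. \<forall>n\<ge>1. avg_dist F Q n y \<omega> < \<epsilon>))"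

definition equi_inv_mean_point ::
  "('x::metric_space \<Rightarrow> 'u \<Rightarrow> 'x) \<Rightarrow> 'u set \<Rightarrow> 'x set \<Rightarrow> 'x \<Rightarrow> bool" where
  "equi_inv_mean_point F U Q x \<longleftrightarrow> x \<in> Q \<and>
     (\<forall>\<epsilon>>0. \<exists>\<delta>>0. \<exists>\<omega>\<in>controls U.
        (\<forall>y\<in>ball x \<delta> \<inter> Q. \<forall>n\<ge>1. avg_dist F Q n y \<omega> < \<epsilon>))"

definition fin_equi_inv_mean :: "('x::metric_space \<Rightarrow> 'u \<Rightarrow> 'x) \<Rightarrow> 'u set \<Rightarrow> 'x set \<Rightarrow> bool" where
  "fin_equi_inv_mean F U Q \<longleftrightarrow> (\<forall>x\<in>Q. fin_equi_inv_mean_point F U Q x)"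

definition equi_inv_mean :: "('x::metric_space \<Rightarrow> 'u \<Rightarrow> 'x) \<Rightarrow> 'u set \<Rightarrow> 'x set \<Rightarrow> bool" where
  "equi_inv_mean F U Q \<longleftrightarrow> (\<forall>x\<in>Q. equi_inv_mean_point F U Q x)"

definition hatQ :: "('x::metric_space \<Rightarrow> 'u \<Rightarrow> 'x) \<Rightarrow> 'x set \<Rightarrow> nat \<Rightarrow> real \<Rightarrow> (nat \<Rightarrow> 'u) \<Rightarrow> 'x set" where
  "hatQ F Q n \<epsilon> \<omega> = {x\<in>Q. Max ((\<lambda>k. avg_dist F Q k x \<omega>) ` {1..n}) < \<epsilon>}"

definition spanning_mean ::
  "('x::metric_space \<Rightarrow> 'u \<Rightarrow> 'x) \<Rightarrow> 'u set \<Rightarrow> nat \<Rightarrow> real \<Rightarrow> 'x set \<Rightarrow> (nat \<Rightarrow> 'u) set \<Rightarrow> bool" where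
  "spanning_mean F U n \<epsilon> Q Fs \<longleftrightarrow> Fs \<subseteq> controls U \<and> Q = (\<Union>\<omega>\<in>Fs. hatQ F Q n \<epsilon> \<omega>)"

text \<open>Minimal cardinality (infinite sets count as infinity; Inf of the empty set is infinity).\<close>
definition r_inv_mean ::
  "('x::metric_space \<Rightarrow> 'u \<Rightarrow> 'x) \<Rightarrow> 'u set \<Rightarrow> nat \<Rightarrow> real \<Rightarrow> 'x set \<Rightarrow> enat" where
  "r_inv_mean F U n \<epsilon> Q =
     (INF Fs \<in> {Fs. spanning_mean F U n \<epsilon> Q Fs}. (if finite Fs then enat (card Fs) else \<infinity>))"

definition bounded_inv_complexity_mean ::
  "('x::metric_space \<Rightarrow> 'u \<Rightarrow> 'x) \<Rightarrow> 'u set \<Rightarrow> 'x set \<Rightarrow> bool" where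
  "bounded_inv_complexity_mean F U Q \<longleftrightarrow>
     (\<forall>\<epsilon>>0. \<exists>C::nat. \<forall>n\<ge>1. r_inv_mean F U n \<epsilon> Q \<le> enat C)"

end

theory Submission
  imports Defs
begin

lemma phi_cong: "(\<And>j. j < i \<Longrightarrow> \<omega> j = \<omega>' j) \<Longrightarrow> phi F i x \<omega> = phi F i x \<omega>'"
  by (induction i) auto

lemma phi_add: "phi F (m + k) x \<omega> = phi F k (phi F m x \<omega>) (\<lambda>i. \<omega> (m + i))"
  by (induction k) auto

definition cat :: "nat \<Rightarrow> (nat \<Rightarrow> 'u) \<Rightarrow> (nat \<Rightarrow> 'u) \<Rightarrow> nat \<Rightarrow> 'u" where
  "cat T \<nu> \<mu> i = (if i < T then \<nu> i else \<mu> (i - T))"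

lemma phi_cat_le: "i \<le> T \<Longrightarrow> phi F i x (cat T \<nu> \<mu>) = phi F i x \<nu>"
  by (rule phi_cong) (simp add: cat_def)

lemma phi_cat_ge: "phi F (T + k) x (cat T \<nu> \<mu>) = phi F k (phi F T x \<nu>) \<mu>"
proof -
  have "(\<lambda>i. cat T \<nu> \<mu> (T + i)) = \<mu>" by (simp add: cat_def)
  then show ?thesis using phi_add[of F T k x "cat T \<nu> \<mu>"] phi_cat_le[of T T F x \<nu> \<mu>] by simp
qed

lemma cat_controls: "\<nu> \<in> controls U \<Longrightarrow> \<mu> \<in> controls U \<Longrightarrow> cat T \<nu> \<mu> \<in> controls U"
  by (simp add: controls_def cat_def)

lemma shift_controls: "\<omega> \<in> controls U \<Longrightarrow> (\<lambda>i. \<omega> (m + i)) \<in> controls U"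
  by (simp add: controls_def)

lemma orbit_trans:
  assumes "q \<in> orbit_plus F U p" "r \<in> orbit_plus F U q"
  shows "r \<in> orbit_plus F U p"
proof -
  obtain m \<omega> where q: "q = phi F m p \<omega>" "\<omega> \<in> controls U" using assms(1) unfolding orbit_plus_def by blast
  obtain k \<mu> where r: "r = phi F k q \<mu>" "\<mu> \<in> controls U" using assms(2) unfolding orbit_plus_def by blast
  have "r = phi F (m + k) p (cat m \<omega> \<mu>)" using q r phi_cat_ge by metis
  moreover have "cat m \<omega> \<mu> \<in> controls U" using q r cat_controls by metis
  ultimately show ?thesis unfolding orbit_plus_def by blast
qed

lemma orbit_shift:
  assumes "\<omega> \<in> controls U" "i \<le> T"
  shows "phi F T x \<omega> \<in> orbit_plus F U (phi F i x \<omega>)"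
proof -
  have "phi F T x \<omega> = phi F (T - i) (phi F i x \<omega>) (\<lambda>j. \<omega> (i + j))"
    using phi_add[of F i "T - i" x \<omega>] assms(2) by simp
  then show ?thesis unfolding orbit_plus_def using shift_controls[OF assms(1)] by blast
qed

lemma orbit_closure_trans:
  fixes F :: "'x::metric_space \<Rightarrow> 'u \<Rightarrow> 'x"
  assumes cont: "\<And>k \<omega>. \<omega> \<in> controls U \<Longrightarrow> continuous_on UNIV (\<lambda>x. phi F k x \<omega>)"
    and q: "q \<in> closure (orbit_plus F U p)"
  shows "closure (orbit_plus F U q) \<subseteq> closure (orbit_plus F U p)"
proof -
  have "orbit_plus F U q \<subseteq> closure (orbit_plus F U p)"
  proof
    fix r assume "r \<in> orbit_plus F U q"
    then obtain k \<mu> where r: "r = phi F k q \<mu>" "\<mu> \<in> controls U" unfolding orbit_plus_def by blast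
    obtain s where s: "\<forall>n. s n \<in> orbit_plus F U p" "s \<longlonglongrightarrow> q"
      using q unfolding closure_sequential by blast
    have ic: "isCont (\<lambda>x. phi F k x \<mu>) q"
      using cont[OF r(2)] continuous_on_eq_continuous_at open_UNIV by blast
    have lim: "(\<lambda>n. phi F k (s n) \<mu>) \<longlonglongrightarrow> r"
      unfolding r(1) by (rule isCont_tendsto_compose[OF ic s(2)])
    have "\<forall>n. phi F k (s n) \<mu> \<in> orbit_plus F U p"
    proof
      fix n
      have "phi F k (s n) \<mu> \<in> orbit_plus F U (s n)" unfolding orbit_plus_def using r(2) by blast
      then show "phi F k (s n) \<mu> \<in> orbit_plus F U p" using orbit_trans s(1) by metis
    qed
    then show "r \<in> closure (orbit_plus F U p)" unfolding closure_sequential using lim by (intro exI[of _ "\<lambda>n. phi F k (s n) \<mu>"] conjI)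
  qed
  then show ?thesis by (simp add: closure_minimal)
qed


lemma seg_in_Q:
  fixes F :: "'x::metric_space \<Rightarrow> 'u \<Rightarrow> 'x"
  assumes cs: "control_set F U Q"
    and cont: "\<And>k \<omega>. \<omega> \<in> controls U \<Longrightarrow> continuous_on UNIV (\<lambda>x. phi F k x \<omega>)"
    and xQ: "x \<in> Q" and \<nu>: "\<nu> \<in> controls U" and yQ: "phi F T x \<nu> \<in> Q"
  shows "\<forall>i\<le>T. phi F i x \<nu> \<in> Q"
proof -
  have csQ: "cs_props F U Q" and maxQ: "\<And>D'. Q \<subseteq> D' \<Longrightarrow> cs_props F U D' \<Longrightarrow> D' = Q"
    using cs unfolding control_set_def by blast+
  have Qi: "\<forall>x\<in>Q. \<exists>\<omega>\<in>controls U. \<forall>k. phi F k x \<omega> \<in> Q"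
    and Qii: "\<forall>x\<in>Q. Q \<subseteq> closure (orbit_plus F U x)"
    using csQ unfolding cs_props_def by blast+
  define S where "S = {phi F i x \<nu> | i. i \<le> T}"
  define D where "D = Q \<union> S"
  have clos_sub: "closure (orbit_plus F U b) \<subseteq> closure (orbit_plus F U a)"
    if "b \<in> orbit_plus F U a" for a b
    using orbit_closure_trans[OF cont] that closure_subset by blast
  have clos_sub2: "closure (orbit_plus F U b) \<subseteq> closure (orbit_plus F U a)"
    if "b \<in> closure (orbit_plus F U a)" for a b
    using orbit_closure_trans[OF cont] that by blast
  have S_orb: "S \<subseteq> orbit_plus F U x" unfolding S_def orbit_plus_def using \<nu> by blast
  have "cs_props F U D"
    unfolding cs_props_def
  proof (intro conjI ballI)
    fix p assume "p \<in> D"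
    then consider "p \<in> Q" | i where "i \<le> T" "p = phi F i x \<nu>" unfolding D_def S_def by blast
    then show "\<exists>\<omega>\<in>controls U. \<forall>k. phi F k p \<omega> \<in> D"
    proof cases
      case 1
      then obtain \<omega> where "\<omega> \<in> controls U" "\<forall>k. phi F k p \<omega> \<in> Q" using Qi by blast
      then show ?thesis unfolding D_def by blast
    next
      case 2
      obtain \<mu> where \<mu>: "\<mu> \<in> controls U" "\<forall>k. phi F k (phi F T x \<nu>) \<mu> \<in> Q" using Qi yQ by blast
      define \<omega> where "\<omega> = cat (T - i) (\<lambda>j. \<nu> (i + j)) \<mu>"
      have \<omega>c: "\<omega> \<in> controls U" unfolding \<omega>_def using cat_controls shift_controls \<nu> \<mu>(1) by blast
      have "phi F k p \<omega> \<in> D" for k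
      proof (cases "k \<le> T - i")
        case True
        have "phi F k p \<omega> = phi F k p (\<lambda>j. \<nu> (i + j))" unfolding \<omega>_def using True phi_cat_le by metis
        also have "\<dots> = phi F (i + k) x \<nu>" using phi_add[of F i k x \<nu>] 2(2) by simp
        finally have "phi F k p \<omega> = phi F (i + k) x \<nu>" .
        moreover have "i + k \<le> T" using True 2(1) by simp
        ultimately show ?thesis unfolding D_def S_def by blast
      next
        case False
        then obtain k' where k': "k = (T - i) + k'" by (metis le_add_diff_inverse nle_le)
        have "phi F k p \<omega> = phi F k' (phi F (T - i) p (\<lambda>j. \<nu> (i + j))) \<mu>"
          unfolding k' \<omega>_def by (rule phi_cat_ge)
        also have "phi F (T - i) p (\<lambda>j. \<nu> (i + j)) = phi F T x \<nu>"
          using phi_add[of F i "T - i" x \<nu>] 2 by simp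
        finally show ?thesis using \<mu>(2) unfolding D_def by simp
      qed
      then show ?thesis using \<omega>c by blast
    qed
  next
    fix p assume pD: "p \<in> D"
    have xcl: "x \<in> closure (orbit_plus F U p) \<and> Q \<subseteq> closure (orbit_plus F U p)"
    proof -
      consider "p \<in> Q" | i where "i \<le> T" "p = phi F i x \<nu>" using pD unfolding D_def S_def by blast
      then have "Q \<subseteq> closure (orbit_plus F U p)"
      proof cases
        case 1 then show ?thesis using Qii by blast
      next
        case 2
        have "phi F T x \<nu> \<in> orbit_plus F U p" using orbit_shift[OF \<nu> 2(1)] 2(2) by simp
        then have "closure (orbit_plus F U (phi F T x \<nu>)) \<subseteq> closure (orbit_plus F U p)"
          by (rule clos_sub)
        moreover have "Q \<subseteq> closure (orbit_plus F U (phi F T x \<nu>))" using Qii yQ by blast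
        ultimately show ?thesis by blast
      qed
      then show ?thesis using xQ by blast
    qed
    have "S \<subseteq> closure (orbit_plus F U p)"
    proof -
      have "closure (orbit_plus F U x) \<subseteq> closure (orbit_plus F U p)" using xcl clos_sub2 by blast
      then show ?thesis using S_orb closure_subset by blast
    qed
    then show "D \<subseteq> closure (orbit_plus F U p)" using xcl unfolding D_def by blast
  qed
  then have "D = Q" using maxQ unfolding D_def by blast
  then show ?thesis unfolding D_def S_def by blast
qed

lemma finite_closed_cover:
  assumes "finite I"
  shows "open W \<Longrightarrow> W \<noteq> {} \<Longrightarrow> W \<subseteq> (\<Union>i\<in>I. A i) \<Longrightarrow> (\<forall>i\<in>I. closed (A i))
         \<Longrightarrow> \<exists>i\<in>I. \<exists>V. open V \<and> V \<noteq> {} \<and> V \<subseteq> A i"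
  using assms
proof (induction I arbitrary: W rule: finite_induct)
  case empty then show ?case by simp
next
  case (insert a I)
  show ?case
  proof (cases "W \<subseteq> A a")
    case True then show ?thesis using insert.prems by blast
  next
    case False
    have o: "open (W - A a)" using insert.prems by (intro open_Diff) auto
    have ne: "W - A a \<noteq> {}" using False by blast
    have "W - A a \<subseteq> (\<Union>i\<in>I. A i)" using insert.prems(3) by blast
    then obtain i V where "i \<in> I" "open V" "V \<noteq> {}" "V \<subseteq> A i"
      using insert.IH[OF o ne] insert.prems(4) by blast
    then show ?thesis by blast
  qed
qed

lemma sum_split_at: "(\<Sum>i<T+m. f i) = (\<Sum>i<T. f i) + (\<Sum>k<m. f (T+k::nat))"
  by (induction m) (simp_all add: add.assoc)

lemma cont_avg_x:
  fixes F :: "'x::metric_space \<Rightarrow> 'u \<Rightarrow> 'x"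
  assumes "\<And>k. continuous_on UNIV (\<lambda>x. phi F k x \<omega>)"
  shows "continuous_on UNIV (\<lambda>y. avg_dist F Q n y \<omega>)"
proof -
  have "continuous_on UNIV (\<lambda>y. (\<Sum>i<n. infdist (phi F i y \<omega>) Q) * inverse (real n))"
    using assms by (intro continuous_intros) auto
  then show ?thesis unfolding avg_dist_def by (simp add: divide_inverse)
qed

lemma fin_to_equi:
  fixes F :: "'x::metric_space \<Rightarrow> 'u \<Rightarrow> 'x"
  assumes cs: "control_set F U Q" and clQ: "closed Q"
    and cont: "\<And>k \<omega>. \<omega> \<in> controls U \<Longrightarrow> continuous_on UNIV (\<lambda>x. phi F k x \<omega>)"
    and intQ: "interior Q \<noteq> {}"
    and glob: "\<And>e. e > 0 \<Longrightarrow> \<exists>Fs. finite Fs \<and> Fs \<subseteq> controls U \<and>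
                  (\<forall>y\<in>Q. \<exists>\<omega>\<in>Fs. \<forall>n\<ge>1. avg_dist F Q n y \<omega> < e)"
  shows "equi_inv_mean F U Q"
  unfolding equi_inv_mean_def equi_inv_mean_point_def
proof (intro ballI conjI allI impI)
  fix x assume "x \<in> Q" then show "x \<in> Q" .
next
  fix x \<epsilon> assume xQ: "x \<in> Q" and ep: "(\<epsilon>::real) > 0"
  define e where "e = \<epsilon> / 2"
  have e0: "e > 0" and ee: "e < \<epsilon>" using ep unfolding e_def by simp_all
  obtain Fs where Fs: "finite Fs" "Fs \<subseteq> controls U"
    "\<forall>y\<in>Q. \<exists>\<omega>\<in>Fs. \<forall>n\<ge>1. avg_dist F Q n y \<omega> < e" using glob[OF e0] by blast
  define A where "A \<omega> = {y\<in>Q. \<forall>n\<ge>1. avg_dist F Q n y \<omega> \<le> e}" for \<omega>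
  have csQ: "cs_props F U Q" using cs unfolding control_set_def by blast
  have Qii: "\<forall>x\<in>Q. Q \<subseteq> closure (orbit_plus F U x)"
    using csQ unfolding cs_props_def by blast
  have clA: "closed (A \<omega>)" if "\<omega> \<in> Fs" for \<omega>
  proof -
    have \<omega>c: "\<omega> \<in> controls U" using that Fs(2) by blast
    have c1: "closed (UNIV \<inter> (\<lambda>y. avg_dist F Q n y \<omega>) -` {..e})" for n
      by (rule continuous_closed_preimage[OF cont_avg_x[OF cont[OF \<omega>c]]]) simp_all
    have "A \<omega> = Q \<inter> (\<Inter>n\<in>{1..}. UNIV \<inter> (\<lambda>y. avg_dist F Q n y \<omega>) -` {..e})"
      unfolding A_def by auto
    moreover have "closed (\<Inter>n\<in>{1..}. UNIV \<inter> (\<lambda>y. avg_dist F Q n y \<omega>) -` {..e})"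
      by (rule closed_INT, rule ballI, rule c1)
    ultimately show ?thesis using clQ by (simp add: closed_Int)
  qed
  have covA: "interior Q \<subseteq> (\<Union>\<omega>\<in>Fs. A \<omega>)"
  proof
    fix y assume "y \<in> interior Q"
    then have yQ: "y \<in> Q" using interior_subset by blast
    then obtain \<omega> where "\<omega> \<in> Fs" "\<forall>n\<ge>1. avg_dist F Q n y \<omega> < e" using Fs(3) by blast
    then have "y \<in> A \<omega>" unfolding A_def using yQ by (simp add: less_imp_le)
    then show "y \<in> (\<Union>\<omega>\<in>Fs. A \<omega>)" using \<open>\<omega> \<in> Fs\<close> by blast
  qed
  obtain \<omega>j V where \<omega>j: "\<omega>j \<in> Fs" and V: "open V" "V \<noteq> {}" "V \<subseteq> A \<omega>j"
    using finite_closed_cover[OF Fs(1) open_interior intQ covA] clA by blast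
  obtain z where zV: "z \<in> V" using V(2) by blast
  obtain r where r: "r > 0" "ball z r \<subseteq> V" using V(1) zV open_contains_ball by blast
  have \<omega>jc: "\<omega>j \<in> controls U" using \<omega>j Fs(2) by blast
  have zQ: "z \<in> Q" using zV V(3) unfolding A_def by blast
  then have "z \<in> closure (orbit_plus F U x)" using Qii xQ by blast
  then obtain p where "p \<in> orbit_plus F U x" "dist p z < r / 2"
    using r(1) unfolding closure_approachable by (metis half_gt_zero)
  then obtain T \<nu> where \<nu>: "\<nu> \<in> controls U" and pz: "dist (phi F T x \<nu>) z < r / 2"
    unfolding orbit_plus_def by blast
  have "phi F T x \<nu> \<in> ball z r" using pz r(1) by (simp add: dist_commute)
  then have pQ: "phi F T x \<nu> \<in> Q" using r(2) V(3) unfolding A_def by blast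
  have seg: "\<forall>i\<le>T. phi F i x \<nu> \<in> Q" by (rule seg_in_Q[OF cs cont xQ \<nu> pQ])
  define \<eta> where "\<eta> = min e (r / 2)"
  have \<eta>0: "\<eta> > 0" using e0 r(1) unfolding \<eta>_def by simp
  have ev1: "\<forall>i\<in>{..T}. eventually (\<lambda>y. dist (phi F i y \<nu>) (phi F i x \<nu>) < \<eta>) (at x)"
  proof
    fix i
    have "isCont (\<lambda>y. phi F i y \<nu>) x"
      using cont[OF \<nu>] continuous_on_eq_continuous_at open_UNIV by blast
    then have "((\<lambda>y. phi F i y \<nu>) \<longlongrightarrow> phi F i x \<nu>) (at x)" by (simp add: isCont_def)
    then show "eventually (\<lambda>y. dist (phi F i y \<nu>) (phi F i x \<nu>) < \<eta>) (at x)"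
      using \<eta>0 unfolding tendsto_iff by blast
  qed
  have "eventually (\<lambda>y. \<forall>i\<in>{..T}. dist (phi F i y \<nu>) (phi F i x \<nu>) < \<eta>) (at x)"
    by (rule eventually_ball_finite[OF finite_atMost ev1])
  then obtain d where d: "d > 0"
    "\<And>y. y \<noteq> x \<Longrightarrow> dist y x < d \<Longrightarrow> \<forall>i\<in>{..T}. dist (phi F i y \<nu>) (phi F i x \<nu>) < \<eta>"
    unfolding eventually_at by blast
  have close: "\<forall>i\<le>T. dist (phi F i y \<nu>) (phi F i x \<nu>) < \<eta>" if "dist y x < d" for y
  proof (cases "y = x")
    case True then show ?thesis using \<eta>0 by simp
  next
    case False then show ?thesis using d(2)[OF False that] by simp
  qed
  define \<omega> where "\<omega> = cat T \<nu> \<omega>j"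
  have \<omega>c: "\<omega> \<in> controls U" unfolding \<omega>_def by (rule cat_controls[OF \<nu> \<omega>jc])
  have main: "avg_dist F Q n y \<omega> < \<epsilon>" if yb: "y \<in> ball x d \<inter> Q" and n1: "n \<ge> 1" for y n
  proof -
    have dy: "dist y x < d" using yb by (simp add: dist_commute)
    have cl: "\<forall>i\<le>T. dist (phi F i y \<nu>) (phi F i x \<nu>) < \<eta>" using close[OF dy] .
    define f where "f i = infdist (phi F i y \<omega>) Q" for i
    have f_pre: "f i \<le> e" if "i < T" for i
    proof -
      have "f i = infdist (phi F i y \<nu>) Q" unfolding f_def \<omega>_def using phi_cat_le[of i T F y \<nu> \<omega>j] that by simp
      also have "\<dots> \<le> dist (phi F i y \<nu>) (phi F i x \<nu>)" using seg that by (simp add: infdist_le)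
      also have "\<dots> < \<eta>" using cl that by simp
      also have "\<dots> \<le> e" unfolding \<eta>_def by simp
      finally show ?thesis by simp
    qed
    define w where "w = phi F T y \<nu>"
    have "dist w z \<le> dist w (phi F T x \<nu>) + dist (phi F T x \<nu>) z" by (rule dist_triangle)
    also have "\<dots> < r / 2 + r / 2" using cl pz unfolding w_def \<eta>_def by (intro add_strict_mono) auto
    finally have "w \<in> ball z r" by (simp add: dist_commute)
    then have wA: "w \<in> A \<omega>j" using r(2) V(3) by blast
    have f_post: "f (T + k) = infdist (phi F k w \<omega>j) Q" for k
      unfolding f_def \<omega>_def w_def by (simp add: phi_cat_ge)
    have sumle: "(\<Sum>i<n. f i) \<le> real n * e"
    proof (cases "n \<le> T")
      case True
      have "(\<Sum>i<n. f i) \<le> of_nat (card {..<n}) * e"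
        by (rule sum_bounded_above) (use True f_pre in auto)
      then show ?thesis by simp
    next
      case False
      define m where "m = n - T"
      have m: "n = T + m" "m \<ge> 1" using False unfolding m_def by simp_all
      have s1: "(\<Sum>i<T. f i) \<le> real T * e"
      proof -
        have "(\<Sum>i<T. f i) \<le> of_nat (card {..<T}) * e"
          by (rule sum_bounded_above) (use f_pre in auto)
        then show ?thesis by simp
      qed
      have "avg_dist F Q m w \<omega>j \<le> e" using wA m(2) unfolding A_def by blast
      then have "(\<Sum>k<m. infdist (phi F k w \<omega>j) Q) / real m \<le> e" unfolding avg_dist_def .
      then have s2: "(\<Sum>k<m. f (T + k)) \<le> real m * e"
        using m(2) by (simp add: f_post pos_divide_le_eq mult.commute)
      have "(\<Sum>i<n. f i) = (\<Sum>i<T. f i) + (\<Sum>k<m. f (T + k))" unfolding m(1) by (rule sum_split_at)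
      also have "\<dots> \<le> real T * e + real m * e" using s1 s2 by simp
      also have "\<dots> = real n * e" unfolding m(1) by (simp add: algebra_simps)
      finally show ?thesis .
    qed
    have "avg_dist F Q n y \<omega> = (\<Sum>i<n. f i) / real n" unfolding avg_dist_def f_def ..
    also have "\<dots> \<le> e" using sumle n1 by (simp add: pos_divide_le_eq mult.commute)
    finally show ?thesis using ee by simp
  qed
  show "\<exists>\<delta>>0. \<exists>\<omega>\<in>controls U. \<forall>y\<in>ball x \<delta> \<inter> Q. \<forall>n\<ge>1. avg_dist F Q n y \<omega> < \<epsilon>"
    using d(1) \<omega>c main by blast
qed
lemma controls_PiE: "controls U = PiE UNIV (\<lambda>_. U)"
  unfolding controls_def by (auto simp: PiE_def extensional_def)

lemma compact_PiE_UNIV: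
  fixes S :: "'b::topological_space set"
  assumes "compact S"
  shows "compact (PiE (UNIV::'a set) (\<lambda>_. S))"
proof -
  have "compactin (product_topology (\<lambda>_. euclidean) (UNIV::'a set)) (PiE UNIV (\<lambda>_. S))"
    using assms by (simp add: compactin_PiE)
  then show ?thesis by (simp add: euclidean_product_topology)
qed

lemma enat_INF_attained:
  fixes f :: "'a \<Rightarrow> enat"
  assumes "(INF a\<in>A. f a) \<le> enat C"
  shows "\<exists>a\<in>A. f a \<le> enat C"
proof -
  have ne: "f ` A \<noteq> {}"
  proof
    assume "f ` A = {}"
    then have "(INF a\<in>A. f a) = \<infinity>" unfolding Inf_enat_def by simp
    with assms show False by simp
  qed
  then have e: "(INF a\<in>A. f a) = (LEAST x. x \<in> f ` A)" unfolding Inf_enat_def by simp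
  obtain y where "y \<in> f ` A" using ne by blast
  then have "(LEAST x. x \<in> f ` A) \<in> f ` A" by (rule LeastI)
  then obtain a where a: "(LEAST x. x \<in> f ` A) = f a" "a \<in> A" by (rule imageE)
  have "f a \<le> enat C" using assms unfolding e a(1) .
  then show ?thesis using a(2) by blast
qed

lemma ex_span:
  assumes "r_inv_mean F U n e Q \<le> enat C" "Q \<noteq> {}"
  shows "\<exists>t. (\<forall>j. t j \<in> controls U) \<and> (\<forall>x\<in>Q. \<exists>j<C. x \<in> hatQ F Q n e (t j))"
proof -
  obtain Fs where sp0: "Fs \<in> {Fs. spanning_mean F U n e Q Fs}"
    and le: "(if finite Fs then enat (card Fs) else \<infinity>) \<le> enat C"
    using enat_INF_attained[OF assms(1)[unfolded r_inv_mean_def]] by blast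
  have sp: "spanning_mean F U n e Q Fs" using sp0 by simp
  have fin: "finite Fs" using le by (cases "finite Fs") simp_all
  have cle: "card Fs \<le> C" using le fin by simp
  have sub: "Fs \<subseteq> controls U" and eq: "Q = (\<Union>\<omega>\<in>Fs. hatQ F Q n e \<omega>)"
    using sp unfolding spanning_mean_def by simp_all
  have cov: "Q \<subseteq> (\<Union>\<omega>\<in>Fs. hatQ F Q n e \<omega>)" using eq by (rule equalityD1)
  have ne: "Fs \<noteq> {}" using cov assms(2) by blast
  then have cpos: "card Fs > 0" using fin by (simp add: card_gt_0_iff)
  obtain h where h: "bij_betw h {0..<card Fs} Fs" using ex_bij_betw_nat_finite[OF fin] by blast
  define t where "t j = h (if j < card Fs then j else 0)" for j
  have "t j \<in> Fs" for j
  proof -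
    have "(if j < card Fs then j else 0) \<in> {0..<card Fs}" using cpos by simp
    then show ?thesis unfolding t_def using h bij_betwE by blast
  qed
  then have "\<forall>j. t j \<in> controls U" using sub by blast
  moreover have "\<exists>j<C. x \<in> hatQ F Q n e (t j)" if xQ: "x \<in> Q" for x
  proof -
    obtain \<omega> where om: "\<omega> \<in> Fs" "x \<in> hatQ F Q n e \<omega>" using cov xQ by blast
    then obtain i where i: "i \<in> {0..<card Fs}" "\<omega> = h i" using h unfolding bij_betw_def by blast
    then have "t i = \<omega>" unfolding t_def by simp
    moreover have "i < C" using i cle by simp
    ultimately show ?thesis using om by blast
  qed
  ultimately show ?thesis by blast
qed

lemma cont_phi:
  assumes "\<forall>k. continuous_on (UNIV \<times> controls U) (\<lambda>(x, \<omega>). phi F k x \<omega>)"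
  shows "continuous_on (controls U) (\<lambda>\<omega>. phi F i x \<omega>)"
proof -
  have c1: "continuous_on (controls U) (\<lambda>\<omega>. (x, \<omega>))" by (intro continuous_intros)
  have "(\<lambda>\<omega>. (x, \<omega>)) ` controls U \<subseteq> UNIV \<times> controls U" by auto
  from continuous_on_compose2[OF assms[rule_format, of i] c1 this] show ?thesis by simp
qed

lemma cont_avg:
  fixes F :: "'x::metric_space \<Rightarrow> 'u::metric_space \<Rightarrow> 'x"
  assumes "\<forall>k. continuous_on (UNIV \<times> controls U) (\<lambda>(x, \<omega>). phi F k x \<omega>)"
  shows "continuous_on (PiE UNIV (\<lambda>_. controls U)) (\<lambda>t::nat\<Rightarrow>nat\<Rightarrow>'u. avg_dist F Q k x (t j))"
proof -
  let ?S = "PiE UNIV (\<lambda>_. controls U) :: (nat\<Rightarrow>nat\<Rightarrow>'u) set"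
  have cj: "continuous_on ?S (\<lambda>t. t j)"
    by (rule continuous_on_subset[OF continuous_on_product_coordinates subset_UNIV])
  have im: "(\<lambda>t. t j) ` ?S \<subseteq> controls U" by (auto simp: PiE_iff)
  have ci: "continuous_on ?S (\<lambda>t. phi F i x (t j))" for i
    using continuous_on_compose2[OF cont_phi[OF assms] cj im] .
  have "continuous_on ?S (\<lambda>t. (\<Sum>i<k. infdist (phi F i x (t j)) Q) * inverse (real k))"
    using ci by (intro continuous_intros) auto
  then show ?thesis unfolding avg_dist_def by (simp add: divide_inverse)
qed

lemma bounded_to_fin:
  fixes F :: "'x::metric_space \<Rightarrow> 'u::metric_space \<Rightarrow> 'x"
  assumes cU: "compact U"
    and A3: "\<forall>k. continuous_on (UNIV \<times> controls U) (\<lambda>(x, \<omega>). phi F k x \<omega>)"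
    and Qne: "Q \<noteq> {}" and bd: "bounded_inv_complexity_mean F U Q"
  shows "fin_equi_inv_mean F U Q"
  unfolding fin_equi_inv_mean_def fin_equi_inv_mean_point_def
proof (intro ballI conjI allI impI)
  fix x assume "x \<in> Q" then show "x \<in> Q" .
next
  fix x \<epsilon> assume xQ: "x \<in> Q" and ep: "(\<epsilon>::real) > 0"
  define e where "e = \<epsilon> / 2"
  have e0: "e > 0" and ee: "e < \<epsilon>" using ep unfolding e_def by simp_all
  have "\<exists>C::nat. \<forall>n\<ge>1. r_inv_mean F U n e Q \<le> enat C"
    using bd e0 unfolding bounded_inv_complexity_mean_def by simp
  then obtain C :: nat where C0: "\<forall>n\<ge>1. r_inv_mean F U n e Q \<le> enat C" by (elim exE)
  have C: "r_inv_mean F U n e Q \<le> enat C" if "n \<ge> 1" for n using C0 that by simp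
  let ?S = "PiE UNIV (\<lambda>_. controls U) :: (nat\<Rightarrow>nat\<Rightarrow>'u) set"
  have cS: "compact ?S"
    using compact_PiE_UNIV[of "controls U"] cU unfolding controls_PiE
    by (simp add: compact_PiE_UNIV)
  define K where "K n = (\<Inter>x\<in>Q. \<Union>j<C. \<Inter>k\<in>{1..Suc n}.
        (?S \<inter> (\<lambda>t. avg_dist F Q k x (t j)) -` {..e}))" for n
  have clK: "closed (K n)" for n
  proof -
    have cl: "closed (?S \<inter> (\<lambda>t. avg_dist F Q k x (t j)) -` {..e})" for k x j
      by (rule continuous_closed_preimage[OF cont_avg[OF A3] compact_imp_closed[OF cS]]) simp
    show ?thesis unfolding K_def
    proof (rule closed_INT, rule ballI)
      fix y assume "y \<in> Q"
      show "closed (\<Union>j<C. \<Inter>k\<in>{1..Suc n}. ?S \<inter> (\<lambda>t. avg_dist F Q k y (t j)) -` {..e})"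
      proof (rule closed_UN[OF finite_lessThan], rule ballI)
        fix j assume "j \<in> {..<C}"
        show "closed (\<Inter>k\<in>{1..Suc n}. ?S \<inter> (\<lambda>t. avg_dist F Q k y (t j)) -` {..e})"
          by (rule closed_INT, rule ballI, rule cl)
      qed
    qed
  qed
  have Kne: "?S \<inter> K n \<noteq> {}" for n
  proof -
    obtain t where t: "\<forall>j. t j \<in> controls U" "\<forall>x\<in>Q. \<exists>j<C. x \<in> hatQ F Q (Suc n) e (t j)"
      using ex_span[OF C[of "Suc n"] Qne] by auto
    have tS: "t \<in> ?S" using t(1) by (simp add: PiE_iff)
    have "t \<in> K n" unfolding K_def
    proof (intro INT_I)
      fix y assume yQ: "y \<in> Q"
      obtain j where j: "j < C" "y \<in> hatQ F Q (Suc n) e (t j)" using t(2) yQ by blast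
      have "\<forall>k\<in>{1..Suc n}. avg_dist F Q k y (t j) < e"
        using j(2) unfolding hatQ_def by simp
      then have "t \<in> (\<Inter>k\<in>{1..Suc n}. ?S \<inter> (\<lambda>t. avg_dist F Q k y (t j)) -` {..e})"
        using tS by force
      then show "t \<in> (\<Union>j<C. \<Inter>k\<in>{1..Suc n}. ?S \<inter> (\<lambda>t. avg_dist F Q k y (t j)) -` {..e})"
        using j(1) by blast
    qed
    then show ?thesis using tS by blast
  qed
  have Kmono: "K m \<subseteq> K n" if "n \<le> m" for m n
  proof -
    have sub: "{1..Suc n} \<subseteq> {1..Suc m}" using that by auto
    show ?thesis unfolding K_def
      apply (rule INT_anti_mono[OF order_refl])
      apply (rule UN_mono[OF order_refl])
      apply (rule INT_anti_mono[OF sub order_refl])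
      done
  qed
  have "?S \<inter> (\<Inter>n\<in>UNIV. K n) \<noteq> {}"
  proof (rule compact_imp_fip_image[OF cS])
    show "closed (K n)" for n by (rule clK)
    fix I' :: "nat set" assume fI: "finite I'" and "I' \<subseteq> UNIV"
    define N where "N = (if I' = {} then 0 else Max I')"
    have "K N \<subseteq> (\<Inter>i\<in>I'. K i)"
    proof
      fix t assume "t \<in> K N"
      show "t \<in> (\<Inter>i\<in>I'. K i)"
      proof
        fix i assume iI: "i \<in> I'"
        then have "I' \<noteq> {}" by blast
        then have "i \<le> N" unfolding N_def using fI iI by simp
        then show "t \<in> K i" using Kmono \<open>t \<in> K N\<close> by blast
      qed
    qed
    then show "?S \<inter> (\<Inter>i\<in>I'. K i) \<noteq> {}" using Kne[of N] by blast
  qed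
  then obtain t where tS: "t \<in> ?S" and tK: "\<And>n. t \<in> K n" by blast
  have good: "\<exists>j<C. \<forall>n\<ge>1. avg_dist F Q n y (t j) < \<epsilon>" if yQ: "y \<in> Q" for y
  proof (rule ccontr)
    assume "\<not> ?thesis"
    then have "\<forall>j<C. \<exists>k\<ge>1. \<not> avg_dist F Q k y (t j) < \<epsilon>" by blast
    then obtain kk where kk: "\<And>j. j < C \<Longrightarrow> kk j \<ge> 1 \<and> \<not> avg_dist F Q (kk j) y (t j) < \<epsilon>"
      by metis
    define N where "N = Max (kk ` {..<C})"
    have "t \<in> (\<Union>j<C. \<Inter>k\<in>{1..Suc N}. ?S \<inter> (\<lambda>t. avg_dist F Q k y (t j)) -` {..e})"
      using tK[of N] yQ unfolding K_def by blast
    then obtain j where j: "j < C" "\<And>k. k \<in> {1..Suc N} \<Longrightarrow> avg_dist F Q k y (t j) \<le> e"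
      by blast
    have "kk j \<le> N" unfolding N_def using j(1) by (intro Max_ge) auto
    then have "kk j \<in> {1..Suc N}" using kk[OF j(1)] by simp
    then have "avg_dist F Q (kk j) y (t j) \<le> e" by (rule j(2))
    then show False using kk[OF j(1)] ee by simp
  qed
  show "\<exists>\<delta>>0. \<exists>Fs. finite Fs \<and> Fs \<subseteq> controls U \<and>
          (\<forall>y\<in>ball x \<delta> \<inter> Q. \<exists>\<omega>\<in>Fs. \<forall>n\<ge>1. avg_dist F Q n y \<omega> < \<epsilon>)"
  proof (intro exI conjI)
    show "(1::real) > 0" by simp
    show "finite (t ` {..<C})" by simp
    show "t ` {..<C} \<subseteq> controls U" using tS by (auto simp: PiE_iff)
    show "\<forall>y\<in>ball x 1 \<inter> Q. \<exists>\<omega>\<in>t ` {..<C}. \<forall>n\<ge>1. avg_dist F Q n y \<omega> < \<epsilon>"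
    proof
      fix y assume "y \<in> ball x 1 \<inter> Q"
      then obtain j where "j < C" "\<forall>n\<ge>1. avg_dist F Q n y (t j) < \<epsilon>" using good by blast
      then show "\<exists>\<omega>\<in>t ` {..<C}. \<forall>n\<ge>1. avg_dist F Q n y \<omega> < \<epsilon>" by blast
    qed
  qed
qed

lemma fin_global:
  fixes F :: "'x::metric_space \<Rightarrow> 'u::metric_space \<Rightarrow> 'x"
  assumes cQ: "compact Q" and fe: "fin_equi_inv_mean F U Q" and ep: "\<epsilon> > 0"
  shows "\<exists>Fs. finite Fs \<and> Fs \<subseteq> controls U \<and> (\<forall>y\<in>Q. \<exists>\<omega>\<in>Fs. \<forall>n\<ge>1. avg_dist F Q n y \<omega> < \<epsilon>)"
proof -
  have h1: "\<forall>x\<in>Q. \<exists>\<delta>. \<delta> > 0 \<and> (\<exists>Fs. finite Fs \<and> Fs \<subseteq> controls U \<and>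
        (\<forall>y\<in>ball x \<delta> \<inter> Q. \<exists>\<omega>\<in>Fs. \<forall>n\<ge>1. avg_dist F Q n y \<omega> < \<epsilon>))"
  proof
    fix x assume "x \<in> Q"
    then have "fin_equi_inv_mean_point F U Q x" using fe unfolding fin_equi_inv_mean_def by simp
    then show "\<exists>\<delta>. \<delta> > 0 \<and> (\<exists>Fs. finite Fs \<and> Fs \<subseteq> controls U \<and>
        (\<forall>y\<in>ball x \<delta> \<inter> Q. \<exists>\<omega>\<in>Fs. \<forall>n\<ge>1. avg_dist F Q n y \<omega> < \<epsilon>))"
      using ep unfolding fin_equi_inv_mean_point_def by simp
  qed
  from bchoice[OF h1] obtain d where d: "\<forall>x\<in>Q. d x > 0 \<and> (\<exists>Fs. finite Fs \<and> Fs \<subseteq> controls U \<and>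
        (\<forall>y\<in>ball x (d x) \<inter> Q. \<exists>\<omega>\<in>Fs. \<forall>n\<ge>1. avg_dist F Q n y \<omega> < \<epsilon>))" by (elim exE)
  then have h2: "\<forall>x\<in>Q. \<exists>Fs. finite Fs \<and> Fs \<subseteq> controls U \<and>
        (\<forall>y\<in>ball x (d x) \<inter> Q. \<exists>\<omega>\<in>Fs. \<forall>n\<ge>1. avg_dist F Q n y \<omega> < \<epsilon>)" by simp
  from bchoice[OF h2] obtain G where G: "\<forall>x\<in>Q. finite (G x) \<and> G x \<subseteq> controls U \<and>
        (\<forall>y\<in>ball x (d x) \<inter> Q. \<exists>\<omega>\<in>G x. \<forall>n\<ge>1. avg_dist F Q n y \<omega> < \<epsilon>)" by (elim exE)
  have cov: "Q \<subseteq> (\<Union>x\<in>Q. ball x (d x))"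
  proof
    fix x assume "x \<in> Q" then have "x \<in> ball x (d x)" using d by simp
    then show "x \<in> (\<Union>x\<in>Q. ball x (d x))" using \<open>x \<in> Q\<close> by blast
  qed
  obtain Q' where Q': "Q' \<subseteq> Q" "finite Q'" "Q \<subseteq> (\<Union>x\<in>Q'. ball x (d x))"
    by (rule compactE_image[OF cQ _ cov]) simp
  define Fs where "Fs = (\<Union>x\<in>Q'. G x)"
  have fFs: "finite Fs" unfolding Fs_def using Q' G by auto
  have sFs: "Fs \<subseteq> controls U" unfolding Fs_def using Q' G by auto
  have good: "\<exists>\<omega>\<in>Fs. \<forall>n\<ge>1. avg_dist F Q n y \<omega> < \<epsilon>" if yQ: "y \<in> Q" for y
  proof -
    obtain x where x: "x \<in> Q'" "y \<in> ball x (d x)" using Q'(3) yQ by blast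
    have xQ: "x \<in> Q" using x(1) Q'(1) by blast
    then have "\<forall>y\<in>ball x (d x) \<inter> Q. \<exists>\<omega>\<in>G x. \<forall>n\<ge>1. avg_dist F Q n y \<omega> < \<epsilon>" using G by simp
    then obtain \<omega> where "\<omega> \<in> G x" "\<forall>n\<ge>1. avg_dist F Q n y \<omega> < \<epsilon>" using x(2) yQ by blast
    moreover have "G x \<subseteq> Fs" unfolding Fs_def using x(1) by blast
    ultimately show ?thesis by blast
  qed
  show ?thesis using fFs sFs good by blast
qed

lemma fin_to_bounded:
  fixes F :: "'x::metric_space \<Rightarrow> 'u::metric_space \<Rightarrow> 'x"
  assumes cQ: "compact Q" and fe: "fin_equi_inv_mean F U Q"
  shows "bounded_inv_complexity_mean F U Q"
  unfolding bounded_inv_complexity_mean_def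
proof (intro allI impI)
  fix \<epsilon> :: real assume ep: "\<epsilon> > 0"
  obtain Fs where fFs: "finite Fs" and sFs: "Fs \<subseteq> controls U"
    and good0: "\<forall>y\<in>Q. \<exists>\<omega>\<in>Fs. \<forall>n\<ge>1. avg_dist F Q n y \<omega> < \<epsilon>"
    using fin_global[OF cQ fe ep] by blast
  have good: "\<exists>\<omega>\<in>Fs. \<forall>n\<ge>1. avg_dist F Q n y \<omega> < \<epsilon>" if yQ: "y \<in> Q" for y
    using good0 yQ by blast
  show "\<exists>C::nat. \<forall>n\<ge>1. r_inv_mean F U n \<epsilon> Q \<le> enat C"
  proof (intro exI allI impI)
    fix n :: nat assume n1: "n \<ge> 1"
    have sp: "spanning_mean F U n \<epsilon> Q Fs"
      unfolding spanning_mean_def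
    proof (intro conjI sFs equalityI subsetI)
      fix y assume yQ: "y \<in> Q"
      obtain \<omega> where om: "\<omega> \<in> Fs" "\<forall>n\<ge>1. avg_dist F Q n y \<omega> < \<epsilon>" using good[OF yQ] by blast
      have "Max ((\<lambda>k. avg_dist F Q k y \<omega>) ` {1..n}) < \<epsilon>"
        using n1 om(2) by simp
      then have "y \<in> hatQ F Q n \<epsilon> \<omega>" unfolding hatQ_def using yQ by simp
      then show "y \<in> (\<Union>\<omega>\<in>Fs. hatQ F Q n \<epsilon> \<omega>)" using om(1) by blast
    next
      fix y assume "y \<in> (\<Union>\<omega>\<in>Fs. hatQ F Q n \<epsilon> \<omega>)"
      then show "y \<in> Q" unfolding hatQ_def by blast
    qed
    have "r_inv_mean F U n \<epsilon> Q \<le> (if finite Fs then enat (card Fs) else \<infinity>)"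
      unfolding r_inv_mean_def using sp by (intro INF_lower) simp
    then show "r_inv_mean F U n \<epsilon> Q \<le> enat (card Fs)" using fFs by simp
  qed
qed

lemma equi_to_fin:
  assumes "equi_inv_mean F U Q" shows "fin_equi_inv_mean F U Q"
  unfolding fin_equi_inv_mean_def fin_equi_inv_mean_point_def
proof (intro ballI conjI allI impI)
  fix x assume xQ: "x \<in> Q" then show "x \<in> Q" .
next
  fix x \<epsilon> assume xQ: "x \<in> Q" and ep: "(\<epsilon>::real) > 0"
  have "equi_inv_mean_point F U Q x" using assms xQ unfolding equi_inv_mean_def by simp
  then obtain \<delta> \<omega> where "\<delta> > 0" "\<omega> \<in> controls U"
    "\<forall>y\<in>ball x \<delta> \<inter> Q. \<forall>n\<ge>1. avg_dist F Q n y \<omega> < \<epsilon>"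
    using ep unfolding equi_inv_mean_point_def by blast
  then show "\<exists>\<delta>>0. \<exists>Fs. finite Fs \<and> Fs \<subseteq> controls U \<and>
          (\<forall>y\<in>ball x \<delta> \<inter> Q. \<exists>\<omega>\<in>Fs. \<forall>n\<ge>1. avg_dist F Q n y \<omega> < \<epsilon>)"
    by (intro exI[of _ \<delta>] conjI exI[of _ "{\<omega>}"]) auto
qed

theorem mainTheorem6:
  fixes F :: "'x::metric_space \<Rightarrow> 'u::metric_space \<Rightarrow> 'x"
    and U :: "'u set" and Q :: "'x set"
  assumes "compact U"
    and "\<forall>u\<in>U. continuous_on UNIV (\<lambda>x. F x u)"
    and "\<forall>k. continuous_on (UNIV \<times> controls U) (\<lambda>(x, \<omega>). phi F k x \<omega>)"
    and "compact Q" and "control_set F U Q" and "interior Q \<noteq> {}"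
  shows "(equi_inv_mean F U Q \<longleftrightarrow> fin_equi_inv_mean F U Q) \<and>
         (fin_equi_inv_mean F U Q \<longleftrightarrow> bounded_inv_complexity_mean F U Q)"
proof -
  have Qne: "Q \<noteq> {}" using assms(6) interior_subset by blast
  have cont: "continuous_on UNIV (\<lambda>x. phi F k x \<omega>)" if "\<omega> \<in> controls U" for k \<omega>
  proof -
    have c1: "continuous_on UNIV (\<lambda>x. (x, \<omega>))" by (intro continuous_intros)
    have "(\<lambda>x. (x, \<omega>)) ` UNIV \<subseteq> UNIV \<times> controls U" using that by auto
    from continuous_on_compose2[OF assms(3)[rule_format, of k] c1 this] show ?thesis by simp
  qed
  have f2e: "equi_inv_mean F U Q" if "fin_equi_inv_mean F U Q"
    using fin_to_equi[OF assms(5) compact_imp_closed[OF assms(4)] cont assms(6)]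
      fin_global[OF assms(4) that] by blast
  have f2b: "bounded_inv_complexity_mean F U Q" if "fin_equi_inv_mean F U Q"
    by (rule fin_to_bounded[OF assms(4) that])
  have b2f: "fin_equi_inv_mean F U Q" if "bounded_inv_complexity_mean F U Q"
    by (rule bounded_to_fin[OF assms(1) assms(3) Qne that])
  show ?thesis using equi_to_fin f2e f2b b2f by blast
qed

end
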